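(* Define real algebras $A_i$, $i\ge 0$, by $A_0=\mathbb{R}$ with $\bar a=a$, and $A_{i+1}=A_i\oplus A_i$ with multiplication $(a,b)(c,d)=(ac-d\bar b,\ \bar a d+cb)$ and involution $\overline{(a,b)}=(\bar a,-b)$. Then every $A_i$, $i\ge0$, is von-Neumann finite and reversible.
   Context: An algebra $A$ (unital, not necessarily associative) is von-Neumann finite if $ab=1$ implies $ba=1$ for all $a,b\in A$, and reversible if $ab=0$ implies $ba=0$ for all $a,b\in A$. *)

theory Defs
  imports Main "HOL.Real"
begin

text \<open>An element of A_n is represented
as a real list of length 2^n; for n+1 the first half is the component a and the
second half the component b of the pair (a,b) in A_n + A_n.\<close>

definition cd_carrier :: "nat \<Rightarrow> real list set" where
  "cd_carrier n = {x. length x = 2 ^ n}"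

definition cd_add :: "real list \<Rightarrow> real list \<Rightarrow> real list" where
  "cd_add x y = map2 (+) x y"

definition cd_sub :: "real list \<Rightarrow> real list \<Rightarrow> real list" where
  "cd_sub x y = map2 (-) x y"

fun cd_conj :: "nat \<Rightarrow> real list \<Rightarrow> real list" where
  "cd_conj 0 x = x"
| "cd_conj (Suc n) x = cd_conj n (take (2 ^ n) x) @ map uminus (drop (2 ^ n) x)"

fun cd_mul :: "nat \<Rightarrow> real list \<Rightarrow> real list \<Rightarrow> real list" where
  "cd_mul 0 x y = [hd x * hd y]"
| "cd_mul (Suc n) x y =
     (let a = take (2 ^ n) x; b = drop (2 ^ n) x;
          c = take (2 ^ n) y; d = drop (2 ^ n) y
      in cd_sub (cd_mul n a c) (cd_mul n d (cd_conj n b))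
         @ cd_add (cd_mul n (cd_conj n a) d) (cd_mul n c b))"

definition cd_zero :: "nat \<Rightarrow> real list" where
  "cd_zero n = replicate (2 ^ n) 0"

definition cd_one :: "nat \<Rightarrow> real list" where
  "cd_one n = 1 # replicate (2 ^ n - 1) 0"

definition von_neumann_finite :: "'a set \<Rightarrow> ('a \<Rightarrow> 'a \<Rightarrow> 'a) \<Rightarrow> 'a \<Rightarrow> bool" where
  "von_neumann_finite A mul one \<longleftrightarrow>
     (\<forall>a\<in>A. \<forall>b\<in>A. mul a b = one \<longrightarrow> mul b a = one)"

definition reversible :: "'a set \<Rightarrow> ('a \<Rightarrow> 'a \<Rightarrow> 'a) \<Rightarrow> 'a \<Rightarrow> bool" where
  "reversible A mul zero \<longleftrightarrow>
     (\<forall>a\<in>A. \<forall>b\<in>A. mul a b = zero \<longrightarrow> mul b a = zero)"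

end

theory Submission
  imports Defs
begin

definition lin :: "real \<Rightarrow> real list \<Rightarrow> real \<Rightarrow> real list \<Rightarrow> real list" where
  "lin r x s y = map2 (\<lambda>p q. r*p + s*q) x y"

definition ip :: "real list \<Rightarrow> real list \<Rightarrow> real" where
  "ip x y = sum_list (map2 (*) x y)"

lemma add_lin: "cd_add x y = lin 1 x 1 y" by (simp add: cd_add_def lin_def)
lemma sub_lin: "cd_sub x y = lin 1 x (-1) y" by (simp add: cd_sub_def lin_def)

lemma len_lin[simp]: "length (lin r x s y) = min (length x) (length y)"
  by (simp add: lin_def)

lemma nth_lin[simp]: "i < length x \<Longrightarrow> i < length y \<Longrightarrow> lin r x s y ! i = r * x!i + s * y!i"
  by (simp add: lin_def)

lemma lin_append: "length a = length c \<Longrightarrow> lin r (a@b) s (c@d) = lin r a s c @ lin r b s d"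
  by (simp add: lin_def)

lemma ip_nth: "length x = length y \<Longrightarrow> ip x y = (\<Sum>i<length x. x!i * y!i)"
  by (simp add: ip_def sum_list_sum_nth atLeast0LessThan)

lemma ip_append: "length a = length c \<Longrightarrow> ip (a@b) (c@d) = ip a c + ip b d"
  by (simp add: ip_def)

lemma ip_comm: "ip x y = ip y x"
  unfolding ip_def by (induction x arbitrary: y) (auto simp: zip_Cons1 split: list.splits)

lemma ip_lin: "length x = length z \<Longrightarrow> length y = length z \<Longrightarrow>
   ip (lin r x s y) z = r * ip x z + s * ip y z"
  by (simp add: ip_nth sum_distrib_left sum.distrib algebra_simps)

lemma conj_len[simp]: "length (cd_conj n x) = length x"
  by (induction n arbitrary: x) auto

lemma conj_Suc: "length a = 2^n \<Longrightarrow> cd_conj (Suc n) (a@b) = cd_conj n a @ map uminus b"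
  by simp

lemma mul_Suc: "length a = 2^n \<Longrightarrow> length c = 2^n \<Longrightarrow>
  cd_mul (Suc n) (a@b) (c@d) = cd_sub (cd_mul n a c) (cd_mul n d (cd_conj n b))
         @ cd_add (cd_mul n (cd_conj n a) d) (cd_mul n c b)"
  by (simp add: Let_def)

lemma split2: "length x = 2^Suc n \<Longrightarrow> \<exists>a b. x = a@b \<and> length a = 2^n \<and> length b = 2^n"
  by (rule exI[of _ "take (2^n) x"], rule exI[of _ "drop (2^n) x"]) auto

lemma mul_len[simp]: "length x = 2^n \<Longrightarrow> length y = 2^n \<Longrightarrow> length (cd_mul n x y) = 2^n"
proof (induction n arbitrary: x y)
  case 0 then show ?case by simp
next
  case (Suc n)
  from split2[OF Suc.prems(1)] obtain a b where x: "x = a@b" "length a = 2^n" "length b = 2^n" by blast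
  from split2[OF Suc.prems(2)] obtain c d where y: "y = c@d" "length c = 2^n" "length d = 2^n" by blast
  show ?case using x y by (simp add: mul_Suc Suc.IH add_lin sub_lin)
qed

lemma conj_conj[simp]: "length x = 2^n \<Longrightarrow> cd_conj n (cd_conj n x) = x"
proof (induction n arbitrary: x)
  case 0 then show ?case by simp
next
  case (Suc n)
  from split2[OF Suc.prems(1)] obtain a b where x: "x = a@b" "length a = 2^n" "length b = 2^n" by blast
  show ?case using x by (simp add: Suc.IH comp_def)
qed

lemma conj_lin: "length x = 2^n \<Longrightarrow> length y = 2^n \<Longrightarrow>
   cd_conj n (lin r x s y) = lin r (cd_conj n x) s (cd_conj n y)"
proof (induction n arbitrary: x y)
  case 0 then show ?case by simp
next
  case (Suc n)
  from split2[OF Suc.prems(1)] obtain a b where x: "x = a@b" "length a = 2^n" "length b = 2^n" by blast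
  from split2[OF Suc.prems(2)] obtain c d where y: "y = c@d" "length c = 2^n" "length d = 2^n" by blast
  have "map uminus (lin r b s d) = lin r (map uminus b) s (map uminus d)"
    using x y by (intro nth_equalityI) auto
  then show ?case using x y by (simp add: lin_append Suc.IH)
qed

lemma lin_sub_lin: "length x = m \<Longrightarrow> length y = m \<Longrightarrow> length u = m \<Longrightarrow> length v = m \<Longrightarrow>
  lin p (lin r x s y) q (lin r u s v) = lin r (lin p x q u) s (lin p y q v)"
  by (intro nth_equalityI) (auto simp: algebra_simps)

lemma mul_lin_left: "length x = 2^n \<Longrightarrow> length y = 2^n \<Longrightarrow> length z = 2^n \<Longrightarrow>
   cd_mul n (lin r x s y) z = lin r (cd_mul n x z) s (cd_mul n y z)"
  and mul_lin_right: "length x = 2^n \<Longrightarrow> length y = 2^n \<Longrightarrow> length z = 2^n \<Longrightarrow>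
   cd_mul n z (lin r x s y) = lin r (cd_mul n z x) s (cd_mul n z y)"
proof (induction n arbitrary: x y z)
  case 0 
  { case 1 then show ?case by (cases x; cases y; cases z) (auto simp: lin_def algebra_simps) }
  { case 2 then show ?case by (cases x; cases y; cases z) (auto simp: lin_def algebra_simps) }
next
  case (Suc n)
  { case 1
  from split2[OF 1(1)] obtain a b where x: "x = a@b" "length a = 2^n" "length b = 2^n" by blast
  from split2[OF 1(2)] obtain c d where y: "y = c@d" "length c = 2^n" "length d = 2^n" by blast
  from split2[OF 1(3)] obtain e f where z: "z = e@f" "length e = 2^n" "length f = 2^n" by blast
  show ?case using x y z
    by (simp add: lin_append mul_Suc Suc.IH conj_lin add_lin sub_lin lin_sub_lin)
  }
  { case 2
  from split2[OF 2(1)] obtain a b where x: "x = a@b" "length a = 2^n" "length b = 2^n" by blast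
  from split2[OF 2(2)] obtain c d where y: "y = c@d" "length c = 2^n" "length d = 2^n" by blast
  from split2[OF 2(3)] obtain e f where z: "z = e@f" "length e = 2^n" "length f = 2^n" by blast
  show ?case using x y z
    by (simp add: lin_append mul_Suc Suc.IH conj_lin add_lin sub_lin lin_sub_lin)
  }
qed

lemma neg_lin: "map uminus b = lin (-1) b 0 b"
  by (simp add: lin_def map2_map_map[where f="\<lambda>x. x" and g="\<lambda>x. x", simplified] zip_same_conv_map comp_def)

lemma lin0: "length x = m \<Longrightarrow> lin 0 x 0 x = replicate m 0"
  by (intro nth_equalityI) auto

lemma mul_zero_right[simp]: "length x = 2^n \<Longrightarrow> cd_mul n x (cd_zero n) = cd_zero n"
proof -
  assume x: "length x = 2^n"
  have "cd_mul n x (cd_zero n) = cd_mul n x (lin 0 x 0 x)" using x by (simp add: lin0 cd_zero_def)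
  also have "\<dots> = lin 0 (cd_mul n x x) 0 (cd_mul n x x)" using x by (simp add: mul_lin_right)
  also have "\<dots> = cd_zero n" using x by (simp add: lin0 cd_zero_def)
  finally show ?thesis .
qed

lemma mul_zero_left[simp]: "length x = 2^n \<Longrightarrow> cd_mul n (cd_zero n) x = cd_zero n"
proof -
  assume x: "length x = 2^n"
  have "cd_mul n (cd_zero n) x = cd_mul n (lin 0 x 0 x) x" using x by (simp add: lin0 cd_zero_def)
  also have "\<dots> = lin 0 (cd_mul n x x) 0 (cd_mul n x x)" using x by (simp add: mul_lin_left)
  also have "\<dots> = cd_zero n" using x by (simp add: lin0 cd_zero_def)
  finally show ?thesis .
qed

lemma conj_zero[simp]: "cd_conj n (cd_zero n) = cd_zero n"
proof -
  have "cd_conj n (cd_zero n) = cd_conj n (lin 0 (cd_zero n) 0 (cd_zero n))" by (simp add: lin0 cd_zero_def)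
  also have "\<dots> = lin 0 (cd_conj n (cd_zero n)) 0 (cd_conj n (cd_zero n))" by (simp add: conj_lin cd_zero_def)
  also have "\<dots> = cd_zero n" by (simp add: lin0 cd_zero_def)
  finally show ?thesis .
qed

lemma len_zero[simp]: "length (cd_zero n) = 2^n" by (simp add: cd_zero_def)
lemma len_one[simp]: "length (cd_one n) = 2^n" by (simp add: cd_one_def)

lemma lin_rep_right[simp]: "length a = m \<Longrightarrow> lin 1 a s (replicate m 0) = a"
  by (intro nth_equalityI) auto
lemma lin_rep_left[simp]: "length a = m \<Longrightarrow> lin r (replicate m 0) 1 a = a"
  by (intro nth_equalityI) auto

lemma one_Suc: "cd_one (Suc n) = cd_one n @ cd_zero n"
proof -
  have e: "(2::nat)^Suc n - 1 = (2^n - 1) + 2^n" by simp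
  show ?thesis unfolding cd_one_def cd_zero_def e replicate_add by simp
qed

lemma conj_one[simp]: "cd_conj n (cd_one n) = cd_one n"
proof (induction n)
  case 0 then show ?case by (simp add: cd_one_def)
next
  case (Suc n)
  have "map uminus (cd_zero n) = cd_zero n" by (simp add: cd_zero_def)
  then show ?case by (simp add: one_Suc Suc.IH)
qed

lemma mul_one_left[simp]: "length x = 2^n \<Longrightarrow> cd_mul n (cd_one n) x = x"
  and mul_one_right[simp]: "length x = 2^n \<Longrightarrow> cd_mul n x (cd_one n) = x"
proof (induction n arbitrary: x)
  case 0 
  { case 1 then show ?case by (cases x) (auto simp: cd_one_def) }
  { case 2 then show ?case by (cases x) (auto simp: cd_one_def) }
next
  case (Suc n)
  { case 1
  from split2[OF 1(1)] obtain a b where x: "x = a@b" "length a = 2^n" "length b = 2^n" by blast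
  show ?case using x
    by (simp add: one_Suc mul_Suc Suc.IH add_lin sub_lin) (simp add: cd_zero_def Let_def)
  }
  { case 2
  from split2[OF 2(1)] obtain a b where x: "x = a@b" "length a = 2^n" "length b = 2^n" by blast
  show ?case using x
    by (simp add: one_Suc mul_Suc Suc.IH add_lin sub_lin) (simp add: cd_zero_def Let_def)
  }
qed

lemma conj_mul: "length x = 2^n \<Longrightarrow> length y = 2^n \<Longrightarrow>
   cd_conj n (cd_mul n x y) = cd_mul n (cd_conj n y) (cd_conj n x)"
proof (induction n arbitrary: x y)
  case 0 then show ?case by (cases x; cases y) auto
next
  case (Suc n)
  from split2[OF Suc.prems(1)] obtain a b where x: "x = a@b" "length a = 2^n" "length b = 2^n" by blast
  from split2[OF Suc.prems(2)] obtain c d where y: "y = c@d" "length c = 2^n" "length d = 2^n" by blast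
  show ?case using x y
    by (simp add: mul_Suc Suc.IH add_lin sub_lin conj_lin neg_lin mul_lin_left mul_lin_right Let_def)
       (intro conjI nth_equalityI; simp)
qed

lemma adj: "length x = 2^n \<Longrightarrow> length y = 2^n \<Longrightarrow> length z = 2^n \<Longrightarrow>
   ip (cd_mul n x y) z = ip y (cd_mul n (cd_conj n x) z) \<and>
   ip (cd_mul n x y) z = ip x (cd_mul n z (cd_conj n y))"
proof (induction n arbitrary: x y z)
  case 0 then show ?case by (cases x; cases y; cases z) (auto simp: ip_def)
next
  case (Suc n)
  from split2[OF Suc.prems(1)] obtain a b where x: "x = a@b" "length a = 2^n" "length b = 2^n" by blast
  from split2[OF Suc.prems(2)] obtain c d where y: "y = c@d" "length c = 2^n" "length d = 2^n" by blast
  from split2[OF Suc.prems(3)] obtain e f where z: "z = e@f" "length e = 2^n" "length f = 2^n" by blast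
  have ipr: "\<And>u v w. length u = 2^n \<Longrightarrow> length v = 2^n \<Longrightarrow> length w = 2^n \<Longrightarrow>
     ip u (lin r v s w) = r * ip u v + s * ip u w" for r s
    by (subst ip_comm, subst ip_lin, auto simp: ip_comm)
  note IH1 = conjunct1[OF Suc.IH] and IH2 = conjunct2[OF Suc.IH]
  let ?m = "cd_mul n" and ?c = "cd_conj n"
  have L: "ip (cd_mul (Suc n) x y) z = ip (?m a c) e - ip (?m d (?c b)) e + ip (?m (?c a) d) f + ip (?m c b) f"
    using x y z by (simp add: mul_Suc add_lin sub_lin ip_append ip_lin)
  have R1: "ip y (cd_mul (Suc n) (cd_conj (Suc n) x) z) = ip c (?m (?c a) e) + ip c (?m f (?c b)) + ip d (?m a f) - ip d (?m e b)"
    using x y z by (simp add: mul_Suc add_lin sub_lin ip_append ipr neg_lin conj_lin mul_lin_left mul_lin_right Let_def)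
  have R2: "ip x (cd_mul (Suc n) z (cd_conj (Suc n) y)) = ip a (?m e (?c c)) + ip a (?m d (?c f)) - ip b (?m (?c e) d) + ip b (?m (?c c) f)"
    using x y z by (simp add: mul_Suc add_lin sub_lin ip_append ipr neg_lin conj_lin mul_lin_left mul_lin_right Let_def)
  have h1: "ip (?m a c) e = ip c (?m (?c a) e)" "ip (?m a c) e = ip a (?m e (?c c))"
    using IH1[of a c e] IH2[of a c e] x y z by auto
  have h2: "ip (?m (?c a) d) f = ip d (?m a f)" using IH1[of "?c a" d f] x y z by auto
  have h3: "ip (?m c b) f = ip c (?m f (?c b))" "ip (?m c b) f = ip b (?m (?c c) f)"
    using IH1[of c b f] IH2[of c b f] x y z by auto
  have h4: "ip (?m d (?c b)) e = ip d (?m e b)" using IH2[of d "?c b" e] x y z by auto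
  have h5: "ip b (?m (?c e) d) = ip d (?m e b)" using IH1[of "?c e" d b] x y z by (auto simp: ip_comm)
  have h6: "ip a (?m d (?c f)) = ip d (?m a f)" using IH2[of d "?c f" a] x y z by (auto simp: ip_comm)
  show ?case using L R1 R2 h1 h2 h3 h4 h5 h6 by simp
qed

lemma hd_nth0: "x \<noteq> [] \<Longrightarrow> hd x = x ! 0" by (cases x) auto

lemma conj_formula: "length x = 2^n \<Longrightarrow> cd_conj n x = lin (2 * hd x) (cd_one n) (-1) x"
proof (induction n arbitrary: x)
  case 0 then show ?case by (cases x) (auto simp: cd_one_def lin_def)
next
  case (Suc n)
  from split2[OF Suc.prems(1)] obtain a b where x: "x = a@b" "length a = 2^n" "length b = 2^n" by blast
  have "a \<noteq> []" using x by auto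
  then show ?case using x
    by (simp add: Suc.IH one_Suc lin_append) (intro nth_equalityI; simp add: cd_zero_def)
qed

lemma ip_conj: "length x = 2^n \<Longrightarrow> length y = 2^n \<Longrightarrow> ip (cd_conj n x) (cd_conj n y) = ip x y"
proof (induction n arbitrary: x y)
  case 0 then show ?case by simp
next
  case (Suc n)
  from split2[OF Suc.prems(1)] obtain a b where x: "x = a@b" "length a = 2^n" "length b = 2^n" by blast
  from split2[OF Suc.prems(2)] obtain c d where y: "y = c@d" "length c = 2^n" "length d = 2^n" by blast
  have "ip (map uminus b) (map uminus d) = ip b d" using x y by (simp add: ip_nth)
  then show ?case using x y by (simp add: ip_append Suc.IH)
qed

lemma mul_conj_self: "length x = 2^n \<Longrightarrow> cd_mul n x (cd_conj n x) = lin (ip x x) (cd_one n) 0 (cd_one n)"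
proof (induction n arbitrary: x)
  case 0 then show ?case by (cases x) (auto simp: cd_one_def lin_def ip_def)
next
  case (Suc n)
  from split2[OF Suc.prems(1)] obtain a b where x: "x = a@b" "length a = 2^n" "length b = 2^n" by blast
  have e: "cd_mul n (map uminus b) (cd_conj n b) = lin (-1) (cd_mul n b (cd_conj n b)) 0 (cd_mul n b (cd_conj n b))"
    using x by (simp add: neg_lin mul_lin_left)
  have e2: "cd_mul n (cd_conj n a) (map uminus b) = lin (-1) (cd_mul n (cd_conj n a) b) 0 (cd_mul n (cd_conj n a) b)"
    using x by (simp add: neg_lin mul_lin_right)
  show ?case using x
    by (simp add: mul_Suc Suc.IH one_Suc lin_append e e2 add_lin sub_lin ip_append Let_def)
       (intro conjI nth_equalityI; simp add: cd_zero_def nth_append algebra_simps Let_def)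
qed

lemma ip_zero[simp]: "length x = length (cd_zero n) \<Longrightarrow> ip (cd_zero n) x = 0"
  by (simp add: ip_nth cd_zero_def)

lemma ip_one: "length x = 2^n \<Longrightarrow> ip (cd_one n) x = hd x"
proof (induction n arbitrary: x)
  case 0 then show ?case by (cases x) (auto simp: cd_one_def ip_def)
next
  case (Suc n)
  from split2[OF Suc.prems(1)] obtain a b where x: "x = a@b" "length a = 2^n" "length b = 2^n" by blast
  have "a \<noteq> []" using x by auto
  then show ?case using x by (simp add: one_Suc ip_append Suc.IH)
qed

lemma key: "length x = 2^n \<Longrightarrow> length y = 2^n \<Longrightarrow>
  ip (cd_mul n (cd_conj n x) (cd_conj n y)) (cd_mul n (cd_conj n x) (cd_conj n y)) = ip (cd_mul n x y) (cd_mul n x y)"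
proof -
  assume x: "length x = 2^n" and y: "length y = 2^n"
  define e where "e = cd_one n"
  define s where "s = hd x"
  define t where "t = hd y"
  define u where "u = cd_mul n x y"
  define v where "v = cd_mul n x (cd_conj n y)"
  define yb where "yb = cd_conj n y"
  have le: "length e = 2^n" and lu: "length u = 2^n" and lyb: "length yb = 2^n" and lv: "length v = 2^n"
    using x y by (auto simp: e_def u_def yb_def v_def)
  have cx: "cd_conj n x = lin (2*s) e (-1) x" using x by (simp add: conj_formula s_def e_def)
  have cy: "yb = lin (2*t) e (-1) y" using y by (simp add: conj_formula t_def e_def yb_def)
  have w: "cd_mul n (cd_conj n x) (cd_conj n y) = lin (2*s) yb (-1) v"
    using x y le unfolding cx by (simp add: mul_lin_left e_def yb_def v_def)
  have vv: "v = lin (2*t) x (-1) u"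
    using x y le unfolding v_def u_def by (simp only: cy[unfolded yb_def]) (simp add: mul_lin_right e_def)
  have ipr: "\<And>u v w. length u = 2^n \<Longrightarrow> length v = 2^n \<Longrightarrow> length w = 2^n \<Longrightarrow>
     ip u (lin r v w' w) = r * ip u v + w' * ip u w" for r w'
    by (subst ip_comm, subst ip_lin, auto simp: ip_comm)
  have ee: "ip e e = 1" using ip_one[of e n] le by (simp add: e_def cd_one_def)
  have ex: "ip e x = s" "ip x e = s" using ip_one[of x n] x by (auto simp: e_def s_def ip_comm)
  have ey: "ip e y = t" "ip y e = t" using ip_one[of y n] y by (auto simp: e_def t_def ip_comm)
  have yx: "ip y x = ip x y" by (rule ip_comm)
  have ue: "ip u e = ip x yb"
    using conjunct2[OF adj[of x n y e]] x y le by (simp add: u_def yb_def e_def)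
  have uy: "ip u y = ip y y * s"
    using conjunct2[OF adj[of x n y y]] x y by (simp add: u_def mul_conj_self ipr ex[unfolded e_def] ip_comm)
  have ux: "ip u x = ip x x * t"
  proof -
    have "cd_mul n (cd_conj n x) x = lin (ip x x) e 0 e"
      using mul_conj_self[of "cd_conj n x" n] x by (simp add: ip_conj e_def)
    then show ?thesis
      using conjunct1[OF adj[of x n y x]] x y le by (simp add: u_def ipr ey ip_comm)
  qed
  have ue': "ip e u = ip x yb" using ue by (simp add: ip_comm)
  have uy': "ip y u = ip y y * s" using uy by (simp add: ip_comm)
  have ux': "ip x u = ip x x * t" using ux by (simp add: ip_comm)
  have xyb: "ip x yb = 2*t*s - ip x y" unfolding cy using x y le by (simp add: ipr ex)
  show ?thesis unfolding w vv cy u_def[symmetric]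
    using x y le lu apply (simp add: ip_lin ipr)
    apply (simp only: ee ex ey yx ue ue' uy uy' ux ux' xyb)
    apply (thin_tac "length _ = _")+ by algebra
qed

lemma norm_swap: "length x = 2^n \<Longrightarrow> length y = 2^n \<Longrightarrow>
  ip (cd_mul n y x) (cd_mul n y x) = ip (cd_mul n x y) (cd_mul n x y)"
proof -
  assume x: "length x = 2^n" and y: "length y = 2^n"
  have "ip (cd_mul n y x) (cd_mul n y x) = ip (cd_conj n (cd_mul n y x)) (cd_conj n (cd_mul n y x))"
    using x y by (simp add: ip_conj)
  also have "\<dots> = ip (cd_mul n (cd_conj n x) (cd_conj n y)) (cd_mul n (cd_conj n x) (cd_conj n y))"
    using x y by (simp add: conj_mul)
  also have "\<dots> = ip (cd_mul n x y) (cd_mul n x y)" using key x y by blast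
  finally show ?thesis .
qed

lemma re_swap: "length x = 2^n \<Longrightarrow> length y = 2^n \<Longrightarrow> hd (cd_mul n y x) = hd (cd_mul n x y)"
proof -
  assume x: "length x = 2^n" and y: "length y = 2^n"
  have "hd (cd_mul n y x) = ip (cd_mul n y x) (cd_one n)" using x y ip_one[of "cd_mul n y x" n] by (simp add: ip_comm)
  also have "\<dots> = ip y (cd_conj n x)" using conjunct2[OF adj[of y n x "cd_one n"]] x y by simp
  also have "\<dots> = ip (cd_conj n y) x" using ip_conj[of y n "cd_conj n x"] x y by simp
  also have "\<dots> = ip (cd_mul n x y) (cd_one n)" using conjunct2[OF adj[of x n y "cd_one n"]] x y by (simp add: ip_comm)
  also have "\<dots> = hd (cd_mul n x y)" using x y ip_one[of "cd_mul n x y" n] by (simp add: ip_comm)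
  finally show ?thesis .
qed

lemma ip_Cons[simp]: "ip (a#xs) (b#ys) = a*b + ip xs ys" by (simp add: ip_def)
lemma ip_Nil[simp]: "ip [] ys = 0" by (simp add: ip_def)

lemma ip_self_zero: "ip z z = 0 \<Longrightarrow> z = replicate (length z) 0"
proof (induction z)
  case Nil then show ?case by simp
next
  case (Cons a z)
  have nn: "ip z z \<ge> 0" for z by (induction z) auto
  have sq: "a*a \<ge> 0" by simp
  have e: "a*a + ip z z = 0" using Cons.prems by simp
  have "ip z z = 0" using e nn[of z] sq by linarith
  moreover have "a*a = 0" using e nn[of z] sq by linarith
  ultimately have "a = 0" "ip z z = 0" by simp_all
  then show ?case using Cons.IH by simp
qed

theorem corollary4p5:
  fixes n :: nat
  shows "von_neumann_finite (cd_carrier n) (cd_mul n) (cd_one n)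
       \<and> reversible (cd_carrier n) (cd_mul n) (cd_zero n)"
proof
  show "von_neumann_finite (cd_carrier n) (cd_mul n) (cd_one n)"
    unfolding von_neumann_finite_def cd_carrier_def
  proof (intro ballI impI)
    fix a b assume a: "a \<in> {x. length x = 2^n}" and b: "b \<in> {x. length x = 2^n}"
      and ab: "cd_mul n a b = cd_one n"
    let ?z = "cd_mul n b a"
    have lz: "length ?z = 2^n" using a b by simp
    have h: "hd ?z = 1" using re_swap[of a n b] a b ab by (simp add: cd_one_def)
    have N: "ip ?z ?z = 1" using norm_swap[of a n b] a b ab by (simp add: cd_one_def ip_def sum_list_replicate)
    obtain c zs where z: "?z = c # zs" using lz by (cases ?z) auto
    have "c = 1" using h z by simp
    then have "ip zs zs = 0" using N z by simp
    then have "zs = replicate (length zs) 0" by (rule ip_self_zero)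
    moreover have "length zs = 2^n - 1" using lz z by simp
    ultimately show "?z = cd_one n" using z \<open>c = 1\<close> by (simp add: cd_one_def)
  qed
next
  show "reversible (cd_carrier n) (cd_mul n) (cd_zero n)"
    unfolding reversible_def cd_carrier_def
  proof (intro ballI impI)
    fix a b assume a: "a \<in> {x. length x = 2^n}" and b: "b \<in> {x. length x = 2^n}"
      and ab: "cd_mul n a b = cd_zero n"
    let ?z = "cd_mul n b a"
    have lz: "length ?z = 2^n" using a b by simp
    have "ip ?z ?z = 0" using norm_swap[of a n b] a b ab ip_zero[of "cd_zero n" n] by simp
    then have "?z = replicate (length ?z) 0" by (rule ip_self_zero)
    then show "?z = cd_zero n" using lz by (simp add: cd_zero_def)
  qed
qed

end
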